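(* Let $\mathcal{X}$ (with metric $d_{\mathcal X}$) and $\Theta$ be compact metric spaces and let $f_\theta:\mathcal{X}\to\mathbb{R}^p$, $\theta\in\Theta$, be functions such that for each $\theta$ the image $f_\theta(\mathcal{X})$ spans $\mathbb{R}^p$ and $(x,\theta)\mapsto f_\theta(x)$ is continuous on $\mathcal{X}\times\Theta$. Suppose $p\ge 2$. Let $n_{\rm st}\in\mathbb{N}$ and $x_1,\ldots,x_{n_{\rm st}}\in\mathcal{X}$ be such that $M(\xi_{n_{\rm st}},\theta)$ is positive definite for all $\theta\in\Theta$, where $\xi_n=\frac1n\sum_{i=1}^n\delta_{x_i}$. Let $(\theta_n)_{n\ge n_{\rm st}}$ be an arbitrary sequence in $\Theta$, and let $x_{n+1}$, $n\ge n_{\rm st}$, be defined recursively by $$x_{n+1}\in\arg\max_{x\in\mathcal{X}} f_{\theta_n}^{\mathsf T}(x)\,M^{-1}(\xi_n,\theta_n)\,f_{\theta_n}(x).$$ Then there exist $n_0\ge n_{\rm st}$, $\pi_0>0$ and $d_0>0$ such that for each $n\ge n_0$ there are subsets $S_{1,n},\ldots,S_{p,n}$ of $\mathcal{X}$ with $\xi_n(S_{j,n})\ge\pi_0$ and $\mathrm{diam}(S_{j,n})\le d_0$ for $1\le j\le p$, and $d_{\mathcal X}(S_{j,n},S_{k,n})\ge d_0$ for $1\le j<k\le p$.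
   Context: A design is a finitely supported probability measure on $\mathcal{X}$; $\delta_x$ is the point mass at $x$. The information matrix of a design $\xi$ at $\theta$ is $M(\xi,\theta)=\sum_{x\in\mathrm{supp}(\xi)}\xi(x)f_\theta(x)f_\theta^{\mathsf T}(x)$. For nonempty $S_1,S_2\subseteq\mathcal{X}$, $d_{\mathcal X}(S_1,S_2)=\inf\{d_{\mathcal X}(x,z):x\in S_1,z\in S_2\}$ and $\mathrm{diam}(S)=\sup\{d_{\mathcal X}(x,z):x,z\in S\}$. *)

theory Defs
  imports "HOL-Analysis.Analysis"
begin

text \<open>A design is a finitely supported probability measure on the design space,
represented by its probability mass function.\<close>

definition design_supp :: "('a \<Rightarrow> real) \<Rightarrow> 'a set" where
  "design_supp \<xi> = {x. \<xi> x \<noteq> 0}"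

definition is_design :: "'a set \<Rightarrow> ('a \<Rightarrow> real) \<Rightarrow> bool" where
  "is_design X \<xi> \<longleftrightarrow> finite (design_supp \<xi>) \<and> design_supp \<xi> \<subseteq> X
     \<and> (\<forall>x. \<xi> x \<ge> 0) \<and> sum \<xi> (design_supp \<xi>) = 1"

definition design_meas :: "('a \<Rightarrow> real) \<Rightarrow> 'a set \<Rightarrow> real" where
  "design_meas \<xi> S = sum \<xi> (design_supp \<xi> \<inter> S)"

definition outer :: "real^'p \<Rightarrow> real^'p^'p" where
  "outer v = (\<chi> i j. v $ i * v $ j)"

definition info_matrix :: "('b \<Rightarrow> 'a \<Rightarrow> real^'p) \<Rightarrow> ('a \<Rightarrow> real) \<Rightarrow> 'b \<Rightarrow> real^'p^'p" where
  "info_matrix f \<xi> \<theta> = (\<Sum>x\<in>design_supp \<xi>. \<xi> x *\<^sub>R outer (f \<theta> x))"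

definition emp_design :: "(nat \<Rightarrow> 'a) \<Rightarrow> nat \<Rightarrow> 'a \<Rightarrow> real" where
  "emp_design x n = (\<lambda>z. real (card {i\<in>{1..n}. x i = z}) / real n)"

definition pos_def :: "real^'p^'p \<Rightarrow> bool" where
  "pos_def A \<longleftrightarrow> transpose A = A \<and> (\<forall>v. v \<noteq> 0 \<longrightarrow> v \<bullet> (A *v v) > 0)"

end

theory Submission
  imports Defs
begin

lemma supp_emp:
  assumes "t \<ge> 1"
  shows "design_supp (emp_design x t) = x ` {1..t}"
proof -
  have "card {i\<in>{1..t}. x i = z} \<noteq> 0 \<longleftrightarrow> z \<in> x ` {1..t}" for z
    by (auto simp: card_eq_0_iff)
  then show ?thesis using assms by (auto simp: design_supp_def emp_design_def)
qed

lemma sum_emp: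
  fixes h :: "'a \<Rightarrow> 'c::real_vector"
  assumes "t \<ge> 1"
  shows "(\<Sum>z\<in>design_supp (emp_design x t). emp_design x t z *\<^sub>R h z)
       = (1 / real t) *\<^sub>R (\<Sum>i\<in>{1..t}. h (x i))"
proof -
  have "(\<Sum>i\<in>{1..t}. h (x i)) = (\<Sum>z\<in>x ` {1..t}. \<Sum>i\<in>{i\<in>{1..t}. x i = z}. h (x i))"
    by (rule sum.image_gen) simp
  also have "\<dots> = (\<Sum>z\<in>x ` {1..t}. real (card {i\<in>{1..t}. x i = z}) *\<^sub>R h z)"
  proof (rule sum.cong[OF refl])
    fix z
    have "(\<Sum>i\<in>{i\<in>{1..t}. x i = z}. h (x i)) = (\<Sum>i\<in>{i\<in>{1..t}. x i = z}. h z)"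
      by (rule sum.cong) auto
    then show "(\<Sum>i\<in>{i\<in>{1..t}. x i = z}. h (x i)) = real (card {i\<in>{1..t}. x i = z}) *\<^sub>R h z"
      by (simp only: sum_constant_scaleR)
  qed
  finally have "(1 / real t) *\<^sub>R (\<Sum>i\<in>{1..t}. h (x i)) = (\<Sum>z\<in>x ` {1..t}. (real (card {i\<in>{1..t}. x i = z}) / real t) *\<^sub>R h z)"
    by (simp add: scaleR_sum_right)
  then show ?thesis unfolding supp_emp[OF assms] by (simp add: emp_design_def)
qed

lemma info_sum:
  assumes "t \<ge> 1"
  shows "info_matrix f (emp_design x t) th = (1 / real t) *\<^sub>R (\<Sum>i\<in>{1..t}. outer (f th (x i)))"
  unfolding info_matrix_def using sum_emp[OF assms] .

lemma design_meas_emp: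
  assumes "t \<ge> 1"
  shows "design_meas (emp_design x t) S = real (card {i\<in>{1..t}. x i \<in> S}) / real t"
proof -
  have "design_meas (emp_design x t) S = (\<Sum>z\<in>design_supp (emp_design x t). emp_design x t z *\<^sub>R (indicator S z :: real))"
    unfolding design_meas_def supp_emp[OF assms]
    by (simp add: sum.inter_restrict indicator_def)
  also have "\<dots> = (1 / real t) *\<^sub>R (\<Sum>i\<in>{1..t}. indicator S (x i))"
    by (rule sum_emp[OF assms])
  also have "(\<Sum>i\<in>{1..t}. (indicator S (x i)::real)) = real (card {i\<in>{1..t}. x i \<in> S})"
    by (simp add: indicator_def sum.If_cases Int_def conj_commute)
  finally show ?thesis by simp
qed

lemma outer_mv: "outer g *v v = (g \<bullet> v) *\<^sub>R g"
  by (simp add: outer_def matrix_vector_mult_def vec_eq_iff inner_vec_def sum_distrib_left mult.commute mult.left_commute)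

lemma sum_mv: "finite I \<Longrightarrow> (\<Sum>i\<in>I. A i) *v (v::real^'n) = (\<Sum>i\<in>I. A i *v v)"
  by (induction I rule: finite_induct) (auto simp: matrix_vector_mult_add_rdistrib)

lemma bilin:
  assumes "t \<ge> 1"
  shows "a \<bullet> (info_matrix f (emp_design x t) th *v b)
     = (1 / real t) * (\<Sum>i\<in>{1..t}. (a \<bullet> f th (x i)) * (b \<bullet> f th (x i)))"
  using assms
  by (simp add: info_sum scaleR_matrix_vector_assoc[symmetric] sum_mv sum_divide_distrib outer_mv inner_sum_right inner_commute mult.commute)

lemma quad:
  assumes "t \<ge> 1"
  shows "a \<bullet> (info_matrix f (emp_design x t) th *v a)
     = (1 / real t) * (\<Sum>i\<in>{1..t}. (a \<bullet> f th (x i))\<^sup>2)"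
  using bilin[OF assms] by (simp add: power2_eq_square)

lemma CS_form:
  assumes "t \<ge> 1"
  shows "(a \<bullet> (info_matrix f (emp_design x t) th *v b))\<^sup>2
     \<le> (a \<bullet> (info_matrix f (emp_design x t) th *v a)) * (b \<bullet> (info_matrix f (emp_design x t) th *v b))"
proof -
  have "(\<Sum>i\<in>{1..t}. (a \<bullet> f th (x i)) * (b \<bullet> f th (x i)))\<^sup>2
     \<le> (\<Sum>i\<in>{1..t}. (a \<bullet> f th (x i))\<^sup>2) * (\<Sum>i\<in>{1..t}. (b \<bullet> f th (x i))\<^sup>2)" (is ?P)
    by (rule Cauchy_Schwarz_ineq_sum)
  then have "((1 / real t) * (\<Sum>i\<in>{1..t}. (a \<bullet> f th (x i)) * (b \<bullet> f th (x i))))\<^sup>2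
     \<le> ((1 / real t) * (\<Sum>i\<in>{1..t}. (a \<bullet> f th (x i))\<^sup>2)) * ((1 / real t) * (\<Sum>i\<in>{1..t}. (b \<bullet> f th (x i))\<^sup>2))"
  proof -
    assume h: ?P
    have "(1 / real t * s)\<^sup>2 = s\<^sup>2 / (real t * real t)" for s
      by (simp add: power2_eq_square)
    moreover have "(1 / real t * u) * (1 / real t * w) = (u * w) / (real t * real t)" for u w
      by simp
    ultimately show ?thesis using h by (simp only:) (rule divide_right_mono, auto)
  qed
  then show ?thesis unfolding bilin[OF assms] by (simp add: power2_eq_square)
qed

lemma inv_ok:
  fixes A :: "real^'n^'n"
  assumes "\<And>v. v \<noteq> 0 \<Longrightarrow> v \<bullet> (A *v v) > 0"
  shows "A *v (matrix_inv A *v u) = u"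
proof -
  have "\<forall>v. A *v v = 0 \<longrightarrow> v = 0"
    using assms by fastforce
  then have "\<exists>B. B ** A = mat 1" by (simp add: matrix_left_invertible_ker)
  then have "invertible A" by (simp add: invertible_left_inverse)
  then have "A ** matrix_inv A = mat 1 \<and> matrix_inv A ** A = mat 1"
    unfolding invertible_def matrix_inv_def by (rule someI_ex)
  then show ?thesis by (simp add: matrix_vector_mul_assoc)
qed

lemma diameter_le_metric:
  fixes S :: "'a::metric_space set"
  assumes "0 \<le> d" "\<And>a b. a \<in> S \<Longrightarrow> b \<in> S \<Longrightarrow> dist a b \<le> d"
  shows "diameter S \<le> d"
  using assms unfolding diameter_def by (auto intro: cSUP_least)

theorem lemma2p3:
  fixes X :: "'a::metric_space set" and T :: "'b::metric_space set"
    and f :: "'b \<Rightarrow> 'a \<Rightarrow> real^'p"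
    and x :: "nat \<Rightarrow> 'a" and \<theta> :: "nat \<Rightarrow> 'b" and n_st :: nat
  assumes "compact X" "X \<noteq> {}" "compact T" "T \<noteq> {}"
    and "\<And>t. t \<in> T \<Longrightarrow> span (f t ` X) = UNIV"
    and "continuous_on (X \<times> T) (\<lambda>(z, t). f t z)"
    and "CARD('p) \<ge> 2"
    and "\<And>i. 1 \<le> i \<Longrightarrow> i \<le> n_st \<Longrightarrow> x i \<in> X"
    and "\<And>t. t \<in> T \<Longrightarrow> pos_def (info_matrix f (emp_design x n_st) t)"
    and "\<And>n. n \<ge> n_st \<Longrightarrow> \<theta> n \<in> T"
    and "\<And>n. n \<ge> n_st \<Longrightarrow> x (Suc n) \<in> X \<and>
          (\<forall>z\<in>X. f (\<theta> n) z \<bullet> (matrix_inv (info_matrix f (emp_design x n) (\<theta> n)) *v f (\<theta> n) z)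
               \<le> f (\<theta> n) (x (Suc n)) \<bullet> (matrix_inv (info_matrix f (emp_design x n) (\<theta> n)) *v f (\<theta> n) (x (Suc n))))"
  shows "\<exists>n0\<ge>n_st. \<exists>\<pi>0>0. \<exists>d0>0. \<forall>n\<ge>n0. \<exists>S :: 'p \<Rightarrow> 'a set.
           (\<forall>j. S j \<subseteq> X \<and> design_meas (emp_design x n) (S j) \<ge> \<pi>0 \<and> diameter (S j) \<le> d0)
         \<and> (\<forall>j k. j \<noteq> k \<longrightarrow> setdist (S j) (S k) \<ge> d0)"
proof -
  define M where "M n th = info_matrix f (emp_design x n) th" for n th
  define cnt where "cnt n S = card {i\<in>{1..n}. x i \<in> S}" for n S
  obtain t0 where t0: "t0 \<in> T" using assms(4) by blast
  have nst1: "n_st \<ge> 1"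
  proof (rule ccontr)
    assume "\<not> n_st \<ge> 1" then have "n_st = 0" by simp
    then have "info_matrix f (emp_design x n_st) t0 = 0"
      by (simp add: info_matrix_def emp_design_def design_supp_def)
    moreover have "(vec 1 :: real^'p) \<noteq> 0" by (simp add: vec_eq_iff)
    ultimately show False using assms(9)[OF t0] unfolding pos_def_def by force
  qed
  have xX: "x i \<in> X" if "i \<ge> 1" for i
  proof (cases "i \<le> n_st")
    case True then show ?thesis using assms(8) that by blast
  next
    case False
    then have "x (Suc (i - 1)) \<in> X" using assms(11)[of "i - 1"] by auto
    then show ?thesis using that by simp
  qed
  have Qform: "v \<bullet> (M n th *v v) = (1 / real n) * (\<Sum>i\<in>{1..n}. (v \<bullet> f th (x i))\<^sup>2)" if "n \<ge> 1" for n th v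
    using quad[OF that] by (simp add: M_def)
  have Qnn: "0 \<le> v \<bullet> (M n th *v v)" if "n \<ge> 1" for n th v
    using Qform[OF that] by (simp add: sum_nonneg)
  have pd: "v \<bullet> (M n th *v v) > 0" if "n \<ge> n_st" "th \<in> T" "v \<noteq> 0" for n th v
  proof -
    have "0 < v \<bullet> (M n_st th *v v)" using assms(9)[OF that(2)] that(3) by (simp add: pos_def_def M_def)
    also have "\<dots> = (1/real n_st) * (\<Sum>i\<in>{1..n_st}. (v \<bullet> f th (x i))\<^sup>2)" by (rule Qform[OF nst1])
    finally have "0 < (\<Sum>i\<in>{1..n_st}. (v \<bullet> f th (x i))\<^sup>2)" using nst1 by (simp add: zero_less_divide_iff)
    also have "\<dots> \<le> (\<Sum>i\<in>{1..n}. (v \<bullet> f th (x i))\<^sup>2)" by (rule sum_mono2) (use that(1) in auto)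
    finally show ?thesis using Qform[of n] that nst1 by simp
  qed
  have Minv: "M n th *v (matrix_inv (M n th) *v u) = u" if "n \<ge> n_st" "th \<in> T" for n th u
    by (rule inv_ok) (use pd that in auto)
  have contf: "continuous_on T (\<lambda>th. f th z)" if "z \<in> X" for z
  proof -
    have "continuous_on T ((\<lambda>(z, t). f t z) \<circ> (\<lambda>th. (z, th)))"
      by (rule continuous_on_compose) (auto intro!: continuous_intros continuous_on_subset[OF assms(6)] simp: that)
    then show ?thesis by (simp add: o_def)
  qed
  define Q0 where "Q0 p = (\<Sum>i\<in>{1..n_st}. (snd p \<bullet> f (fst p) (x i))\<^sup>2)" for p :: "'b \<times> (real^'p)"
  have contfi: "continuous_on (T \<times> sphere 0 1) (\<lambda>p. f (fst p) (x i))" if "i \<in> {1..n_st}" for i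
    by (rule continuous_on_compose2[OF contf[OF xX] continuous_on_fst]) (use that in auto)
  have contQ: "continuous_on (T \<times> sphere 0 1) Q0"
    unfolding Q0_def
    by (intro continuous_on_sum continuous_on_power continuous_on_inner continuous_on_snd continuous_on_id contfi)
  obtain e0 :: "real^'p" where e0: "norm e0 = 1" using vector_choose_size[of 1] by auto
  have "\<exists>p\<in>T \<times> sphere 0 1. \<forall>q\<in>T \<times> sphere 0 1. Q0 p \<le> Q0 q"
    by (rule continuous_attains_inf[OF compact_Times[OF assms(3) compact_sphere] _ contQ])
       (use t0 e0 in auto)
  then obtain pm where pm: "pm \<in> T \<times> sphere 0 1" "\<And>q. q \<in> T \<times> sphere 0 1 \<Longrightarrow> Q0 pm \<le> Q0 q" by blast
  define \<gamma> where "\<gamma> = Q0 pm / real n_st"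
  have \<gamma>pos: "\<gamma> > 0"
  proof -
    have "snd pm \<noteq> 0" using pm(1) by auto
    then have "0 < snd pm \<bullet> (M n_st (fst pm) *v snd pm)" using pd[of n_st "fst pm"] pm(1) by auto
    then show ?thesis using Qform[OF nst1] nst1 by (simp add: \<gamma>_def Q0_def zero_less_mult_iff)
  qed
  have G: "\<exists>z\<in>X. (e \<bullet> f th z)\<^sup>2 \<ge> \<gamma>" if "th \<in> T" "norm e = 1" for th e
  proof (rule ccontr)
    assume "\<not> ?thesis"
    then have lt: "(e \<bullet> f th (x i))\<^sup>2 < \<gamma>" if "i \<in> {1..n_st}" for i using xX that by force
    have "Q0 (th, e) < (\<Sum>i\<in>{1..n_st}. \<gamma>)"
      unfolding Q0_def by (rule sum_strict_mono) (use lt nst1 in auto)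
    also have "\<dots> = Q0 pm" using nst1 by (simp add: \<gamma>_def)
    finally show False using pm(2)[of "(th, e)"] that by auto
  qed
  have "compact ((\<lambda>(z,t). f t z) ` (X \<times> T))"
    by (rule compact_continuous_image[OF assms(6) compact_Times[OF assms(1) assms(3)]])
  then obtain B where B: "B > 0" "\<And>y. y \<in> (\<lambda>(z,t). f t z) ` (X \<times> T) \<Longrightarrow> norm y \<le> B"
    using compact_imp_bounded bounded_pos by metis
  have fB: "norm (f th z) \<le> B" if "th \<in> T" "z \<in> X" for th z
    using B(2)[of "f th z"] that by force
  have uc: "uniformly_continuous_on (X \<times> T) (\<lambda>(z,t). f t z)"
    by (rule compact_uniformly_continuous[OF assms(6) compact_Times[OF assms(1) assms(3)]])
  have UC: "\<exists>\<delta>>0. \<forall>th\<in>T. \<forall>z\<in>X. \<forall>z'\<in>X. dist z z' < \<delta> \<longrightarrow> norm (f th z - f th z') < \<eta>"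
    if "\<eta> > 0" for \<eta>
  proof -
    obtain \<delta> where "\<delta> > 0" and \<delta>: "\<forall>p\<in>X \<times> T. \<forall>p'\<in>X \<times> T. dist p' p < \<delta> \<longrightarrow>
        dist ((\<lambda>(z,t). f t z) p') ((\<lambda>(z,t). f t z) p) < \<eta>"
      using uc[unfolded uniformly_continuous_on_def, rule_format, OF \<open>\<eta> > 0\<close>] by blast
    show ?thesis
    proof (intro exI[of _ \<delta>] conjI ballI impI)
      fix th z z' assume h: "th \<in> T" "z \<in> X" "z' \<in> X" "dist z z' < \<delta>"
      have "dist (z, th) (z', th) < \<delta>" using h(4) by (simp add: dist_Pair_Pair)
      then have "dist ((\<lambda>(z,t). f t z) (z, th)) ((\<lambda>(z,t). f t z) (z', th)) < \<eta>"
        using \<delta> h by blast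
      then show "norm (f th z - f th z') < \<eta>" by (simp add: dist_norm)
    qed (rule \<open>\<delta> > 0\<close>)
  qed
  define d where "d n = f (\<theta> n) (x (Suc n)) \<bullet> (matrix_inv (M n (\<theta> n)) *v f (\<theta> n) (x (Suc n)))" for n
  have K1: "\<gamma> \<le> d n * (e \<bullet> (M n (\<theta> n) *v e))" if H: "n \<ge> n_st" "norm e = 1" for n e
  proof -
    have n1: "n \<ge> 1" using H nst1 by simp
    have thT: "\<theta> n \<in> T" using assms(10) H by simp
    obtain z where z: "z \<in> X" "(e \<bullet> f (\<theta> n) z)\<^sup>2 \<ge> \<gamma>" using G[OF thT H(2)] by blast
    define A where "A = M n (\<theta> n)"
    define w where "w = matrix_inv A *v f (\<theta> n) z"
    have Aw: "A *v w = f (\<theta> n) z" unfolding w_def A_def by (rule Minv[OF H(1) thT])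
    have h1: "\<gamma> \<le> (e \<bullet> (A *v e)) * (w \<bullet> (A *v w))"
    proof -
      have "\<gamma> \<le> (e \<bullet> (A *v w))\<^sup>2" using z Aw by simp
      also have "\<dots> \<le> (e \<bullet> (A *v e)) * (w \<bullet> (A *v w))" unfolding A_def M_def by (rule CS_form[OF n1])
      finally show ?thesis .
    qed
    have h2: "w \<bullet> (A *v w) \<le> d n"
    proof -
      have "w \<bullet> (A *v w) = f (\<theta> n) z \<bullet> (matrix_inv A *v f (\<theta> n) z)" by (subst Aw) (simp add: w_def inner_commute)
      also have "\<dots> \<le> d n" using assms(11)[OF H(1)] z(1) by (simp add: d_def A_def M_def)
      finally show ?thesis .
    qed
    have h3: "0 \<le> e \<bullet> (A *v e)" unfolding A_def by (rule Qnn[OF n1])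
    from h1 h2 h3 show ?thesis unfolding A_def
      by (metis mult.commute mult_left_mono order_trans)
  qed
  have dpos: "d n > 0" if "n \<ge> n_st" for n
  proof (rule ccontr)
    assume "\<not> d n > 0"
    moreover have "0 \<le> e0 \<bullet> (M n (\<theta> n) *v e0)" using Qnn that nst1 by simp
    ultimately have "d n * (e0 \<bullet> (M n (\<theta> n) *v e0)) \<le> 0" by (simp add: mult_nonpos_nonneg)
    then show False using K1[OF that e0] \<gamma>pos by linarith
  qed
  have K2: "real (cnt n S) * d n \<le> 4 * real n"
    if H: "n \<ge> n_st" "\<And>z. z \<in> S \<Longrightarrow> z \<in> X \<Longrightarrow> norm (f (\<theta> n) z - f (\<theta> n) (x (Suc n))) \<le> sqrt \<gamma> / 2" for n S
  proof -
    have n1: "n \<ge> 1" using H nst1 by simp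
    have thT: "\<theta> n \<in> T" using assms(10) H by simp
    define A where "A = M n (\<theta> n)"
    define u where "u = f (\<theta> n) (x (Suc n))"
    define w where "w = matrix_inv A *v u"
    have Aw: "A *v w = u" unfolding w_def A_def by (rule Minv[OF H(1) thT])
    have dw: "d n = w \<bullet> (A *v w)" by (subst Aw) (simp add: d_def u_def w_def A_def inner_commute)
    have du: "w \<bullet> u = d n" by (simp add: dw Aw)
    have dp: "d n > 0" by (rule dpos[OF H(1)])
    have wb: "sqrt \<gamma> * norm w \<le> d n"
    proof (cases "w = 0")
      case True then show ?thesis using dp by simp
    next
      case False
      define e where "e = (1 / norm w) *\<^sub>R w"
      have ne: "norm e = 1" using False by (simp add: e_def)
      have "e \<bullet> (A *v e) = (w \<bullet> (A *v w)) / (norm w)\<^sup>2"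
        by (simp add: e_def matrix_vector_mult_scaleR power2_eq_square)
      then have "\<gamma> \<le> d n * (d n / (norm w)\<^sup>2)" using K1[OF H(1) ne] dw by (simp add: A_def)
      then have "\<gamma> * (norm w)\<^sup>2 \<le> (d n)\<^sup>2" using False by (simp add: field_simps power2_eq_square)
      then have "sqrt (\<gamma> * (norm w)\<^sup>2) \<le> sqrt ((d n)\<^sup>2)" by (rule real_sqrt_le_mono)
      then show ?thesis using dp \<gamma>pos by (simp add: real_sqrt_mult)
    qed
    have each: "(d n / 2)\<^sup>2 \<le> (w \<bullet> f (\<theta> n) (x i))\<^sup>2" if "i \<in> {i\<in>{1..n}. x i \<in> S}" for i
    proof -
      have xi: "x i \<in> X" "x i \<in> S" using that xX by auto
      have "\<bar>w \<bullet> (f (\<theta> n) (x i) - u)\<bar> \<le> norm w * norm (f (\<theta> n) (x i) - u)"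
        by (rule Cauchy_Schwarz_ineq2)
      also have "\<dots> \<le> norm w * (sqrt \<gamma> / 2)"
        using H(2)[OF xi(2) xi(1)] by (intro mult_left_mono) (auto simp: u_def)
      also have "\<dots> \<le> d n / 2" using wb by (simp add: mult.commute)
      finally have "\<bar>w \<bullet> (f (\<theta> n) (x i) - u)\<bar> \<le> d n / 2" .
      then have "d n / 2 \<le> w \<bullet> f (\<theta> n) (x i)" using du by (simp add: inner_diff_right) (smt (verit))
      then show ?thesis using dp by (intro power_mono) auto
    qed
    have "real (cnt n S) * (d n / 2)\<^sup>2 \<le> (\<Sum>i\<in>{i\<in>{1..n}. x i \<in> S}. (w \<bullet> f (\<theta> n) (x i))\<^sup>2)"
      unfolding cnt_def by (rule sum_bounded_below) (rule each)
    also have "\<dots> \<le> (\<Sum>i\<in>{1..n}. (w \<bullet> f (\<theta> n) (x i))\<^sup>2)" by (rule sum_mono2) auto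
    also have "\<dots> = real n * d n" using Qform[OF n1, where th="\<theta> n" and v=w] n1 dw by (simp add: A_def)
    finally have "real (cnt n S) * (d n * d n) \<le> 4 * real n * d n" by (simp add: power2_eq_square)
    then show ?thesis using dp by (simp add: mult.assoc[symmetric])
  qed
  have K3: "\<exists>e. norm e = 1 \<and> e \<bullet> (M n th *v e) \<le> \<omega>\<^sup>2 + B\<^sup>2 * (real (cnt n (- (\<Union>y\<in>Y. ball y R))) / real n)"
    if H: "n \<ge> 1" "th \<in> T" "Y \<subseteq> X" "finite Y" "card Y < CARD('p)" "\<omega> \<ge> 0"
       "\<And>z y. z \<in> X \<Longrightarrow> y \<in> Y \<Longrightarrow> dist z y < R \<Longrightarrow> norm (f th z - f th y) \<le> \<omega>" for n th Y \<omega> R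
  proof -
    have "dim (f th ` Y) \<le> card (f th ` Y)"
      by (rule dim_le_card) (auto intro: span_base simp: H(4))
    also have "\<dots> \<le> card Y" by (rule card_image_le[OF H(4)])
    finally have "dim (f th ` Y) < DIM(real^'p)" using H(5) by simp
    then obtain v where v: "v \<noteq> 0" "\<And>y. y \<in> span (f th ` Y) \<Longrightarrow> orthogonal v y"
      using orthogonal_to_subspace_exists by blast
    define e where "e = (1 / norm v) *\<^sub>R v"
    have ne: "norm e = 1" using v by (simp add: e_def)
    have eY: "e \<bullet> f th y = 0" if "y \<in> Y" for y
      using v(2)[of "f th y"] that by (auto simp: e_def orthogonal_def intro: span_base)
    define Ou where "Ou = - (\<Union>y\<in>Y. ball y R)"
    have tb: "(e \<bullet> f th (x i))\<^sup>2 \<le> \<omega>\<^sup>2 + (if x i \<in> Ou then B\<^sup>2 else 0)" if "i \<in> {1..n}" for i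
    proof -
      have xi: "x i \<in> X" using xX that by auto
      show ?thesis
      proof (cases "x i \<in> Ou")
        case True
        have "\<bar>e \<bullet> f th (x i)\<bar> \<le> norm e * norm (f th (x i))" by (rule Cauchy_Schwarz_ineq2)
        also have "\<dots> \<le> B" using fB[OF H(2) xi] ne by simp
        finally have "(e \<bullet> f th (x i))\<^sup>2 \<le> B\<^sup>2" using B(1) by (metis abs_le_square_iff abs_of_pos)
        then show ?thesis using True by (simp add: add_increasing)
      next
        case False
        then obtain y where y: "y \<in> Y" "dist y (x i) < R" by (auto simp: Ou_def)
        have "e \<bullet> f th (x i) = e \<bullet> (f th (x i) - f th y)" using eY[OF y(1)] by (simp add: inner_diff_right)
        then have "\<bar>e \<bullet> f th (x i)\<bar> \<le> norm e * norm (f th (x i) - f th y)"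
          using Cauchy_Schwarz_ineq2 by metis
        also have "\<dots> \<le> \<omega>" using H(7)[OF xi y(1)] y(2) ne by (simp add: dist_commute)
        finally have "(e \<bullet> f th (x i))\<^sup>2 \<le> \<omega>\<^sup>2" using H(6) by (metis abs_le_square_iff abs_of_nonneg)
        then show ?thesis using False by simp
      qed
    qed
    have "(\<Sum>i\<in>{1..n}. (e \<bullet> f th (x i))\<^sup>2) \<le> (\<Sum>i\<in>{1..n}. \<omega>\<^sup>2 + (if x i \<in> Ou then B\<^sup>2 else 0))"
      by (rule sum_mono) (rule tb)
    also have "\<dots> = real n * \<omega>\<^sup>2 + B\<^sup>2 * real (cnt n Ou)"
      by (simp add: sum.distrib sum.If_cases cnt_def Int_def conj_commute)
    finally have "(1 / real n) * (\<Sum>i\<in>{1..n}. (e \<bullet> f th (x i))\<^sup>2) \<le> (1 / real n) * (real n * \<omega>\<^sup>2 + B\<^sup>2 * real (cnt n Ou))"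
      using H(1) by (intro mult_left_mono) auto
    also have "\<dots> = \<omega>\<^sup>2 + B\<^sup>2 * (real (cnt n Ou) / real n)" using H(1) by (simp add: field_simps)
    finally show ?thesis using ne Qform[OF H(1)] unfolding Ou_def by metis
  qed
  obtain \<delta>1 where \<delta>1: "\<delta>1 > 0" "\<And>th z z'. th \<in> T \<Longrightarrow> z \<in> X \<Longrightarrow> z' \<in> X \<Longrightarrow> dist z z' < \<delta>1 \<Longrightarrow> norm (f th z - f th z') < sqrt \<gamma> / 2"
    using UC[of "sqrt \<gamma> / 2"] \<gamma>pos by auto
  have seqX: "seq_compact X" using assms(1) compact_imp_seq_compact by blast
  have cover: "\<exists>k. finite k \<and> k \<subseteq> X \<and> X \<subseteq> (\<Union>c\<in>k. ball c \<rho>)" if "\<rho> > 0" for \<rho>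
    using seq_compact_imp_totally_bounded[OF seqX] that by blast
  obtain C1 where C1: "finite C1" "C1 \<subseteq> X" "X \<subseteq> (\<Union>c\<in>C1. ball c (\<delta>1/2))"
    using cover[of "\<delta>1/2"] \<delta>1(1) by auto
  define N1 where "N1 = card C1"
  have N1: "N1 \<ge> 1"
  proof -
    have "C1 \<noteq> {}" using C1(3) assms(2) by auto
    then show ?thesis using C1(1) by (simp add: N1_def Suc_le_eq card_gt_0_iff)
  qed
  define \<omega> where "\<omega> = sqrt (\<gamma> / (32 * real N1))"
  have \<omega>pos: "\<omega> > 0" using \<gamma>pos N1 by (simp add: \<omega>_def)
  have \<omega>sq: "\<omega>\<^sup>2 = \<gamma> / (32 * real N1)" using \<gamma>pos N1 by (simp add: \<omega>_def)
  obtain R where R: "R > 0" "\<And>th z z'. th \<in> T \<Longrightarrow> z \<in> X \<Longrightarrow> z' \<in> X \<Longrightarrow> dist z z' < R \<Longrightarrow> norm (f th z - f th z') < \<omega>"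
    using UC[OF \<omega>pos] by auto
  define \<epsilon>' where "\<epsilon>' = \<gamma> / (32 * real N1 * B\<^sup>2)"
  define \<epsilon> where "\<epsilon> = \<epsilon>' / 2"
  have \<epsilon>pos: "\<epsilon> > 0" "\<epsilon>' > 0" using \<gamma>pos N1 B(1) by (auto simp: \<epsilon>_def \<epsilon>'_def)
  have B\<epsilon>: "B\<^sup>2 * \<epsilon>' = \<gamma> / (32 * real N1)" using B(1) by (simp add: \<epsilon>'_def)
  define M0 where "M0 = 2 * n_st + 4 * N1 + 3"
  have Main: "real (cnt m (- (\<Union>y\<in>Y. ball y R))) > \<epsilon> * real m"
    if Hm: "m \<ge> M0" "Y \<subseteq> X" "finite Y" "card Y < CARD('p)" for m Y
  proof (rule ccontr)
    define Ou where "Ou = - (\<Union>y\<in>Y. ball y R)"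
    assume "\<not> real (cnt m (- (\<Union>y\<in>Y. ball y R))) > \<epsilon> * real m"
    then have hm: "real (cnt m Ou) \<le> \<epsilon> * real m" by (simp add: Ou_def)
    define n where "n = m - m div 2"
    have nn: "n \<ge> n_st" "n \<ge> 1" "m \<le> 2 * n" "n \<le> m" using Hm(1) by (auto simp: n_def M0_def)
    have small: "real (cnt t (ball c (\<delta>1/2))) \<le> real t / (4 * real N1)"
      if Ht: "n \<le> t" "t < m" "x (Suc t) \<in> ball c (\<delta>1/2)" for t c
    proof -
      have t1: "t \<ge> n_st" "t \<ge> 1" using Ht nn by auto
      have thT: "\<theta> t \<in> T" using assms(10) t1 by simp
      have xs: "x (Suc t) \<in> X" using assms(11)[OF t1(1)] by simp
      have "cnt t Ou \<le> cnt m Ou" unfolding cnt_def by (rule card_mono) (use Ht in auto)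
      then have "real (cnt t Ou) \<le> \<epsilon> * real m" using hm by linarith
      also have "\<dots> \<le> \<epsilon> * (2 * real t)" using nn Ht \<epsilon>pos by (intro mult_left_mono) auto
      finally have "real (cnt t Ou) \<le> \<epsilon>' * real t" by (simp add: \<epsilon>_def)
      then have ratio: "real (cnt t Ou) / real t \<le> \<epsilon>'" using t1 by (simp add: pos_divide_le_eq)
      have Rle: "\<And>z y. z \<in> X \<Longrightarrow> y \<in> Y \<Longrightarrow> dist z y < R \<Longrightarrow> norm (f (\<theta> t) z - f (\<theta> t) y) \<le> \<omega>"
        using R(2)[OF thT] Hm(2) by (meson less_imp_le subsetD)
      obtain e where e: "norm e = 1" "e \<bullet> (M t (\<theta> t) *v e) \<le> \<omega>\<^sup>2 + B\<^sup>2 * (real (cnt t Ou) / real t)"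
        using K3[OF t1(2) thT Hm(2) Hm(3) Hm(4) less_imp_le[OF \<omega>pos] Rle] unfolding Ou_def by blast
      have "B\<^sup>2 * (real (cnt t Ou) / real t) \<le> B\<^sup>2 * \<epsilon>'" using ratio by (intro mult_left_mono) auto
      then have Qb: "e \<bullet> (M t (\<theta> t) *v e) \<le> \<gamma> / (16 * real N1)" using e(2) \<omega>sq B\<epsilon> by simp
      have dtp: "d t > 0" by (rule dpos[OF t1(1)])
      have "\<gamma> \<le> d t * (\<gamma> / (16 * real N1))"
        using K1[OF t1(1) e(1)] Qb dtp by (meson mult_left_mono less_imp_le order_trans)
      then have "\<gamma> * (16 * real N1) \<le> d t * \<gamma>" using N1 by (simp add: field_simps)
      then have dbig: "16 * real N1 \<le> d t" using \<gamma>pos by (simp add: mult.commute)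
      have "real (cnt t (ball c (\<delta>1/2))) * d t \<le> 4 * real t"
      proof (rule K2[OF t1(1)])
        fix z assume z: "z \<in> ball c (\<delta>1/2)" "z \<in> X"
        have "dist z (x (Suc t)) \<le> dist z c + dist c (x (Suc t))" by (rule dist_triangle)
        also have "\<dots> < \<delta>1" using z(1) Ht(3) by (simp add: dist_commute)
        finally show "norm (f (\<theta> t) z - f (\<theta> t) (x (Suc t))) \<le> sqrt \<gamma> / 2"
          using \<delta>1(2)[OF thT z(2) xs] by (meson less_imp_le)
      qed
      then have "real (cnt t (ball c (\<delta>1/2))) * (16 * real N1) \<le> 4 * real t"
        using dbig by (meson mult_left_mono of_nat_0_le_iff order_trans)
      then show ?thesis using N1 by (simp add: field_simps)
    qed
    define J where "J c = {i\<in>{n+1..m}. x i \<in> ball c (\<delta>1/2)}" for c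
    have Jb: "real (card (J c)) \<le> real m / (4 * real N1) + 1" for c
    proof (cases "J c = {}")
      case True then show ?thesis by simp
    next
      case False
      have fin: "finite (J c)" by (simp add: J_def)
      define j where "j = Max (J c)"
      have j: "j \<in> J c" using Max_in[OF fin False] j_def by simp
      then have jr: "n+1 \<le> j" "j \<le> m" "x j \<in> ball c (\<delta>1/2)" by (auto simp: J_def)
      define t where "t = j - 1"
      have tt: "n \<le> t" "t < m" "Suc t = j" using jr by (auto simp: t_def)
      have "J c \<subseteq> insert j {i\<in>{1..t}. x i \<in> ball c (\<delta>1/2)}"
      proof
        fix i assume i: "i \<in> J c"
        then have "i \<le> j" using Max_ge[OF fin] j_def by simp
        then show "i \<in> insert j {i\<in>{1..t}. x i \<in> ball c (\<delta>1/2)}" using i tt by (auto simp: J_def)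
      qed
      then have "card (J c) \<le> card (insert j {i\<in>{1..t}. x i \<in> ball c (\<delta>1/2)})" by (rule card_mono[rotated]) simp
      also have "\<dots> \<le> cnt t (ball c (\<delta>1/2)) + 1" by (simp add: cnt_def card_insert_if)
      finally have "real (card (J c)) \<le> real (cnt t (ball c (\<delta>1/2))) + 1" by linarith
      also have "\<dots> \<le> real t / (4 * real N1) + 1" using small[OF tt(1) tt(2)] jr(3) tt(3) by simp
      also have "\<dots> \<le> real m / (4 * real N1) + 1" using tt N1 by (simp add: divide_right_mono)
      finally show ?thesis .
    qed
    have "{n+1..m} \<subseteq> (\<Union>c\<in>C1. J c)"
    proof
      fix i assume i: "i \<in> {n+1..m}"
      then have "x i \<in> X" using xX by auto
      then obtain c where "c \<in> C1" "x i \<in> ball c (\<delta>1/2)" using C1(3) by auto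
      then show "i \<in> (\<Union>c\<in>C1. J c)" using i by (auto simp: J_def)
    qed
    then have "card {n+1..m} \<le> card (\<Union>c\<in>C1. J c)" by (rule card_mono[rotated]) (simp add: J_def C1(1))
    also have "\<dots> \<le> (\<Sum>c\<in>C1. card (J c))" by (rule card_UN_le[OF C1(1)])
    finally have "m - n \<le> (\<Sum>c\<in>C1. card (J c))" by simp
    then have "real (m - n) \<le> real (\<Sum>c\<in>C1. card (J c))" by (rule of_nat_mono)
    then have "real (m - n) \<le> (\<Sum>c\<in>C1. real (card (J c)))" by simp
    also have "\<dots> \<le> real (card C1) * (real m / (4 * real N1) + 1)" by (rule sum_bounded_above) (rule Jb)
    also have "\<dots> = real m / 4 + real N1" using N1 by (simp add: N1_def[symmetric] field_simps)
    finally have A: "real (m - n) \<le> real m / 4 + real N1" .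
    have "2 * (m - n) + 1 \<ge> m" by (simp add: n_def)
    then have "2 * real (m - n) + 1 \<ge> real m" by linarith
    then have "real m \<le> 4 * real N1 + 2" using A by linarith
    then show False using Hm(1) by (simp add: M0_def)
  qed
  define r where "r = R / 5"
  have rpos: "r > 0" using R(1) by (simp add: r_def)
  obtain C2 where C2: "finite C2" "C2 \<subseteq> X" "X \<subseteq> (\<Union>c\<in>C2. ball c r)"
    using cover[OF rpos] by auto
  define N2 where "N2 = card C2"
  have N2: "N2 \<ge> 1"
  proof -
    have "C2 \<noteq> {}" using C2(3) assms(2) by auto
    then show ?thesis using C2(1) by (simp add: N2_def Suc_le_eq card_gt_0_iff)
  qed
  define \<pi>0 where "\<pi>0 = \<epsilon> / real N2"
  have \<pi>0pos: "\<pi>0 > 0" using \<epsilon>pos N2 by (simp add: \<pi>0_def)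
  have final: "\<exists>S :: 'p \<Rightarrow> 'a set.
           (\<forall>j. S j \<subseteq> X \<and> design_meas (emp_design x n) (S j) \<ge> \<pi>0 \<and> diameter (S j) \<le> 2 * r)
         \<and> (\<forall>j k. j \<noteq> k \<longrightarrow> setdist (S j) (S k) \<ge> 2 * r)" if Hn: "n \<ge> M0" for n
  proof -
    have n1: "n \<ge> 1" using Hn by (simp add: M0_def)
    define H where "H = {c\<in>C2. \<pi>0 * real n \<le> real (cnt n (ball c r))}"
    define sep where "sep F \<longleftrightarrow> (\<forall>a\<in>F. \<forall>b\<in>F. a \<noteq> b \<longrightarrow> 4 * r \<le> dist a b)" for F :: "'a set"
    define Fam where "Fam = {F. F \<subseteq> H \<and> sep F}"
    have finH: "finite H" using C2(1) by (simp add: H_def)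
    have finFam: "finite Fam"
      by (rule finite_subset[of _ "Pow H"]) (auto simp: Fam_def finH)
    have emp: "{} \<in> Fam" by (simp add: Fam_def sep_def)
    have "Max (card ` Fam) \<in> card ` Fam" by (rule Max_in) (use finFam emp in auto)
    then obtain F where F1: "F \<in> Fam" and F1': "card F = Max (card ` Fam)" by auto
    have F2: "card G \<le> card F" if "G \<in> Fam" for G
      using Max_ge[of "card ` Fam" "card G"] finFam that F1' by auto
    have FH: "F \<subseteq> H" "sep F" using F1 by (auto simp: Fam_def)
    have FX: "F \<subseteq> X" using FH C2(2) by (auto simp: H_def)
    have finF: "finite F" using finH FH(1) rev_finite_subset by blast
    show ?thesis
    proof (cases "CARD('p) \<le> card F")
      case True
      have "\<exists>\<phi>. \<phi> ` (UNIV::'p set) \<subseteq> F \<and> inj_on \<phi> UNIV"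
        by (rule card_le_inj) (use finF True in auto)
      then obtain \<phi> where \<phi>: "\<phi> ` (UNIV::'p set) \<subseteq> F" "inj_on \<phi> UNIV" by blast
      define S where "S j = ball (\<phi> j) r \<inter> X" for j
      have \<phi>H: "\<phi> j \<in> H" "\<phi> j \<in> X" for j using \<phi>(1) FH(1) FX by auto
      have inS: "\<phi> j \<in> S j" for j using \<phi>H(2) rpos by (simp add: S_def)
      show ?thesis
      proof (intro exI[of _ S] conjI allI impI)
        fix j
        show "S j \<subseteq> X" by (simp add: S_def)
        have c1: "cnt n (S j) = cnt n (ball (\<phi> j) r)" unfolding cnt_def S_def
          by (rule arg_cong[where f=card]) (use xX in auto)
        have c2: "\<pi>0 * real n \<le> real (cnt n (ball (\<phi> j) r))" using \<phi>H(1)[of j] by (simp add: H_def)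
        show "\<pi>0 \<le> design_meas (emp_design x n) (S j)"
        proof -
          have "design_meas (emp_design x n) (S j) = real (cnt n (S j)) / real n"
            unfolding cnt_def by (rule design_meas_emp[OF n1])
          then show ?thesis using c1 c2 n1 by (simp add: pos_le_divide_eq)
        qed
        show "diameter (S j) \<le> 2 * r"
        proof (rule diameter_le_metric)
          show "0 \<le> 2 * r" using rpos by simp
          fix a b assume "a \<in> S j" "b \<in> S j"
          then have "dist (\<phi> j) a < r" "dist (\<phi> j) b < r" by (auto simp: S_def)
          moreover have "dist a b \<le> dist a (\<phi> j) + dist (\<phi> j) b" by (rule dist_triangle)
          ultimately show "dist a b \<le> 2 * r" by (simp add: dist_commute)
        qed
      next
        fix j k :: 'p assume "j \<noteq> k"
        then have "\<phi> j \<noteq> \<phi> k" using \<phi>(2) by (auto dest: inj_onD)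
        then have sp: "4 * r \<le> dist (\<phi> j) (\<phi> k)" using FH(2) \<phi>(1) unfolding sep_def by blast
        show "2 * r \<le> setdist (S j) (S k)"
          unfolding le_setdist_iff
        proof (intro conjI ballI impI)
          fix a b assume "a \<in> S j" "b \<in> S k"
          then have "dist (\<phi> j) a < r" "dist (\<phi> k) b < r" by (auto simp: S_def)
          moreover have "dist (\<phi> j) (\<phi> k) \<le> dist (\<phi> j) a + dist a b + dist b (\<phi> k)"
            using dist_triangle[of "\<phi> j" "\<phi> k" a] dist_triangle[of a "\<phi> k" b] by linarith
          ultimately show "2 * r \<le> dist a b" using sp by (simp add: dist_commute)
        next
          assume "S j = {} \<or> S k = {}"
          then show "2 * r \<le> 0" using inS by auto
        qed
      qed
    next
      case False
      then have cardF: "card F < CARD('p)" by simp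
      define L where "L = C2 - H"
      have sub: "{i\<in>{1..n}. x i \<in> - (\<Union>y\<in>F. ball y R)} \<subseteq> (\<Union>c\<in>L. {i\<in>{1..n}. x i \<in> ball c r})"
      proof
        fix i assume i: "i \<in> {i\<in>{1..n}. x i \<in> - (\<Union>y\<in>F. ball y R)}"
        then have xi: "x i \<in> X" using xX by auto
        then obtain c where c: "c \<in> C2" "x i \<in> ball c r" using C2(3) by auto
        have "c \<notin> H"
        proof
          assume cH: "c \<in> H"
          show False
          proof (cases "c \<in> F")
            case True
            have "dist c (x i) < R" using c(2) R(1) by (simp add: r_def)
            then show False using i True by auto
          next
            case False
            have "card (insert c F) > card F" using False finF by simp
            then have "insert c F \<notin> Fam" using F2 by (meson not_le)
            then have "\<not> sep (insert c F)" using cH FH(1) by (auto simp: Fam_def)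
            then obtain a b where ab: "a \<in> insert c F" "b \<in> insert c F" "a \<noteq> b" "dist a b < 4 * r"
              unfolding sep_def by (meson not_le)
            obtain y where y: "y \<in> F" "dist c y < 4 * r"
            proof (cases "a = c")
              case True
              then show ?thesis using ab that by auto
            next
              case False
              show ?thesis
              proof (cases "b = c")
                case True
                then show ?thesis using ab that \<open>a \<noteq> c\<close> by (auto simp: dist_commute)
              next
                case False
                then have "a \<in> F" "b \<in> F" using ab \<open>a \<noteq> c\<close> by auto
                then have "4 * r \<le> dist a b" using FH(2) ab(3) unfolding sep_def by blast
                then show ?thesis using ab(4) by linarith
              qed
            qed
            have "dist y (x i) \<le> dist y c + dist c (x i)" by (rule dist_triangle)
            also have "\<dots> < R" using y(2) c(2) by (simp add: dist_commute r_def)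
            finally show False using i y(1) by auto
          qed
        qed
        then show "i \<in> (\<Union>c\<in>L. {i\<in>{1..n}. x i \<in> ball c r})" using c i by (auto simp: L_def)
      qed
      have finL: "finite L" using C2(1) by (simp add: L_def)
      have "cnt n (- (\<Union>y\<in>F. ball y R)) \<le> card (\<Union>c\<in>L. {i\<in>{1..n}. x i \<in> ball c r})"
        unfolding cnt_def by (rule card_mono[OF _ sub]) (simp add: finL)
      also have "\<dots> \<le> (\<Sum>c\<in>L. card {i\<in>{1..n}. x i \<in> ball c r})" by (rule card_UN_le[OF finL])
      finally have "real (cnt n (- (\<Union>y\<in>F. ball y R))) \<le> real (\<Sum>c\<in>L. cnt n (ball c r))"
        unfolding cnt_def by (rule of_nat_mono)
      also have "\<dots> = (\<Sum>c\<in>L. real (cnt n (ball c r)))" by simp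
      also have "\<dots> \<le> real (card L) * (\<pi>0 * real n)"
        by (rule sum_bounded_above) (auto simp: L_def H_def)
      also have "\<dots> \<le> real N2 * (\<pi>0 * real n)"
        using \<pi>0pos by (intro mult_right_mono) (auto simp: N2_def L_def C2(1) card_mono)
      also have "\<dots> = \<epsilon> * real n" using N2 by (simp add: \<pi>0_def)
      finally show ?thesis using Main[OF Hn FX finF cardF] by linarith
    qed
  qed
  have "M0 \<ge> n_st" by (simp add: M0_def)
  moreover have "2 * r > 0" using rpos by simp
  ultimately show ?thesis
    apply -
    apply (rule exI[of _ M0])
    apply (rule conjI, assumption)
    apply (rule exI[of _ \<pi>0])
    apply (rule conjI, rule \<pi>0pos)
    apply (rule exI[of _ "2*r"])
    apply (rule conjI, assumption)
    using final by blast
qed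

end
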